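(* In the calculus $\lambda^{RE}$ described in the context: if $e_1\Rrightarrow^* e_1'$, $e_2\Rrightarrow^* e_2'$ and $\delta\vdash e_1'\approx e_2':\tau$, then $\delta\vdash e_1\approx e_2:\tau$.
   Context: Syntax of $\lambda^{RE}$. Basic types $b ::= \mathsf{Bool}\mid\mathsf{Unit}$. Constants $c ::= \mathsf{true}\mid\mathsf{false}\mid\mathsf{unit}\mid (=_b)\mid (=_{(c,b)})$. Expressions $e ::= c\mid x\mid e\ e\mid \lambda x{:}\tau.\,e\mid \mathsf{BEq}_b\ e\ e\ e\mid \mathsf{XEq}_{x:\tau\to\tau}\ e\ e\ e$. Values $v ::= c\mid \lambda x{:}\tau.\,e\mid \mathsf{BEq}_b\ e\ e\ v\mid \mathsf{XEq}_{x:\tau\to\tau}\ e\ e\ v$. Types $\tau ::= \{x{:}b\mid e\}\mid x{:}\tau\to\tau\mid \mathsf{PEq}_{\tau}\{e\}\{e\}$. $e[x:=e']$ is capture-avoiding substitution. Reduction: evaluation contexts $E ::= \bullet\mid E\ e\mid v\ E\mid \mathsf{BEq}_b\ e\ e\ E\mid\mathsf{XEq}_{x:\tau\to\tau}\ e\ e\ E$; $E[e]\to E[e']$ if $e\to e'$; $(\lambda x{:}\tau.\,e)\ v\to e[x:=v]$; $(=_b)\ c_1\to(=_{(c_1,b)})$; $(=_{(c_1,b)})\ c_2\to\mathsf{true}$ if $c_1,c_2$ syntactically equal, else $\to\mathsf{false}$. $\to^*$ is the reflexive–transitive closure. Parallel reduction $e\Rrightarrow e'$, $\tau\Rrightarrow\tau'$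 (inductive): $x\Rrightarrow x$; $c\Rrightarrow c$; $\lambda x{:}\tau.e\Rrightarrow\lambda x{:}\tau'.e'$ if $\tau\Rrightarrow\tau'$, $e\Rrightarrow e'$; $e_1\ e_2\Rrightarrow e_1'\ e_2'$ if $e_i\Rrightarrow e_i'$; $(\lambda x{:}\tau.e)\ v\Rrightarrow e'[x:=v']$ if $e\Rrightarrow e'$, $v\Rrightarrow v'$; $(=_b)\ c_1\Rrightarrow(=_{(c_1,b)})$; $(=_{(c_1,b)})\ c_2\Rrightarrow\mathsf{true}$ if $c_1,c_2$ syntactically equal, $\Rrightarrow\mathsf{false}$ otherwise; $\mathsf{BEq}$ and $\mathsf{XEq}$ terms reduce componentwise (including type annotations); types reduce componentwise ($\{x{:}b\mid r\}\Rrightarrow\{x{:}b\mid r'\}$ if $r\Rrightarrow r'$, etc.). $\Rrightarrow^*$ is the reflexive–transitive closure. Equivalence logical relation. A pending substitution $\delta$ maps variables to pairs of closed values; $\delta_1,\delta_2$ are its component substitutions, and $\delta,(v_1,v_2)/x$ extends it. Value relation $\delta\vdash v_1\approx_{val}v_2:\tau$: for $\{x{:}b\mid r\}$: $v_1=v_2=c$ with $c$ a constant of simple type $b$, $\delta_1(r[x:=c])\to^*\mathsf{true}$ and $\delta_2(r[x:=c])\to^*\mathsf{true}$; for $x{:}\tau_x\to\tau$: for all $v_3,v_4$ with $\delta\vdash v_3\approx_{val}v_4:\tau_x$, $\delta,(v_3,v_4)/x\vdash v_1\ v_3\approx v_2\ v_4:\tau$; for $\mathsf{PEq}_\tau\{e_l\}\{e_r\}$: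 $\delta\vdash\delta_1(e_l)\approx\delta_2(e_r):\tau$. Expression relation: $\delta\vdash e_1\approx e_2:\tau$ iff $e_1\to^*v_1$, $e_2\to^*v_2$ and $\delta\vdash v_1\approx_{val}v_2:\tau$. *)

theory Defs
  imports Main
begin

datatype bty = BBool | BUnit

datatype const =
    CTrue | CFalse | CUnit
  | CEqB bty
  | CEqC const bty

text \<open>Binders:
  Lam tau e binds index 0 in e;
  XEq tx t e1 e2 e3 : annotation x:tx -> t, binding index 0 in t;
  TRef b r : {x:b | r}, binding index 0 in r;
  TFun tx t : x:tx -> t, binding index 0 in t.\<close>

datatype expr =
    Const const
  | Var nat
  | App expr expr
  | Lam ty expr
  | BEq bty expr expr expr
  | XEq ty ty expr expr expr
and ty =
    TRef bty expr
  | TFun ty ty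
  | TPEq ty expr expr

fun liftE :: "nat \<Rightarrow> expr \<Rightarrow> expr"
and liftT :: "nat \<Rightarrow> ty \<Rightarrow> ty" where
  "liftE k (Const c) = Const c"
| "liftE k (Var i) = Var (if i < k then i else Suc i)"
| "liftE k (App a b) = App (liftE k a) (liftE k b)"
| "liftE k (Lam t e) = Lam (liftT k t) (liftE (Suc k) e)"
| "liftE k (BEq b a1 a2 a3) = BEq b (liftE k a1) (liftE k a2) (liftE k a3)"
| "liftE k (XEq tx t a1 a2 a3) =
     XEq (liftT k tx) (liftT (Suc k) t) (liftE k a1) (liftE k a2) (liftE k a3)"
| "liftT k (TRef b r) = TRef b (liftE (Suc k) r)"
| "liftT k (TFun tx t) = TFun (liftT k tx) (liftT (Suc k) t)"
| "liftT k (TPEq t a b) = TPEq (liftT k t) (liftE k a) (liftE k b)"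

fun substE :: "nat \<Rightarrow> expr \<Rightarrow> expr \<Rightarrow> expr"
and substT :: "nat \<Rightarrow> expr \<Rightarrow> ty \<Rightarrow> ty" where
  "substE k s (Const c) = Const c"
| "substE k s (Var i) = (if i < k then Var i else if i = k then s else Var (i - 1))"
| "substE k s (App a b) = App (substE k s a) (substE k s b)"
| "substE k s (Lam t e) = Lam (substT k s t) (substE (Suc k) (liftE 0 s) e)"
| "substE k s (BEq b a1 a2 a3) = BEq b (substE k s a1) (substE k s a2) (substE k s a3)"
| "substE k s (XEq tx t a1 a2 a3) =
     XEq (substT k s tx) (substT (Suc k) (liftE 0 s) t)
         (substE k s a1) (substE k s a2) (substE k s a3)"
| "substT k s (TRef b r) = TRef b (substE (Suc k) (liftE 0 s) r)"
| "substT k s (TFun tx t) = TFun (substT k s tx) (substT (Suc k) (liftE 0 s) t)"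
| "substT k s (TPEq t a b) = TPEq (substT k s t) (substE k s a) (substE k s b)"

text \<open>e[x:=e'] where x is the innermost bound variable (index 0).\<close>
abbreviation subst0 :: "expr \<Rightarrow> expr \<Rightarrow> expr" where
  "subst0 e s \<equiv> substE 0 s e"

fun closedE :: "nat \<Rightarrow> expr \<Rightarrow> bool"
and closedT :: "nat \<Rightarrow> ty \<Rightarrow> bool" where
  "closedE k (Const c) = True"
| "closedE k (Var i) = (i < k)"
| "closedE k (App a b) = (closedE k a \<and> closedE k b)"
| "closedE k (Lam t e) = (closedT k t \<and> closedE (Suc k) e)"
| "closedE k (BEq b a1 a2 a3) = (closedE k a1 \<and> closedE k a2 \<and> closedE k a3)"
| "closedE k (XEq tx t a1 a2 a3) =
     (closedT k tx \<and> closedT (Suc k) t \<and> closedE k a1 \<and> closedE k a2 \<and> closedE k a3)"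
| "closedT k (TRef b r) = closedE (Suc k) r"
| "closedT k (TFun tx t) = (closedT k tx \<and> closedT (Suc k) t)"
| "closedT k (TPEq t a b) = (closedT k t \<and> closedE k a \<and> closedE k b)"

abbreviation closed :: "expr \<Rightarrow> bool" where "closed e \<equiv> closedE 0 e"

inductive is_value :: "expr \<Rightarrow> bool" where
  "is_value (Const c)"
| "is_value (Lam t e)"
| "is_value v \<Longrightarrow> is_value (BEq b a1 a2 v)"
| "is_value v \<Longrightarrow> is_value (XEq tx t a1 a2 v)"

inductive step :: "expr \<Rightarrow> expr \<Rightarrow> bool" where
  st_beta: "is_value v \<Longrightarrow> step (App (Lam t e) v) (subst0 e v)"
| st_eq1: "step (App (Const (CEqB b)) (Const c1)) (Const (CEqC c1 b))"
| st_eq2: "step (App (Const (CEqC c1 b)) (Const c2)) (Const (if c1 = c2 then CTrue else CFalse))"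
| st_app1: "step e e' \<Longrightarrow> step (App e e2) (App e' e2)"
| st_app2: "is_value v \<Longrightarrow> step e e' \<Longrightarrow> step (App v e) (App v e')"
| st_beq: "step e e' \<Longrightarrow> step (BEq b a1 a2 e) (BEq b a1 a2 e')"
| st_xeq: "step e e' \<Longrightarrow> step (XEq tx t a1 a2 e) (XEq tx t a1 a2 e')"

abbreviation steps :: "expr \<Rightarrow> expr \<Rightarrow> bool" where
  "steps \<equiv> step\<^sup>*\<^sup>*"

inductive par :: "expr \<Rightarrow> expr \<Rightarrow> bool"
and parT :: "ty \<Rightarrow> ty \<Rightarrow> bool" where
  par_var: "par (Var x) (Var x)"
| par_const: "par (Const c) (Const c)"
| par_lam: "parT t t' \<Longrightarrow> par e e' \<Longrightarrow> par (Lam t e) (Lam t' e')"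
| par_app: "par e1 e1' \<Longrightarrow> par e2 e2' \<Longrightarrow> par (App e1 e2) (App e1' e2')"
| par_beta: "is_value v \<Longrightarrow> par e e' \<Longrightarrow> par v v' \<Longrightarrow> par (App (Lam t e) v) (subst0 e' v')"
| par_eq1: "par (App (Const (CEqB b)) (Const c1)) (Const (CEqC c1 b))"
| par_eq2: "par (App (Const (CEqC c1 b)) (Const c2)) (Const (if c1 = c2 then CTrue else CFalse))"
| par_beq: "par a1 a1' \<Longrightarrow> par a2 a2' \<Longrightarrow> par a3 a3' \<Longrightarrow>
    par (BEq b a1 a2 a3) (BEq b a1' a2' a3')"
| par_xeq: "parT tx tx' \<Longrightarrow> parT t t' \<Longrightarrow> par a1 a1' \<Longrightarrow> par a2 a2' \<Longrightarrow> par a3 a3' \<Longrightarrow>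
    par (XEq tx t a1 a2 a3) (XEq tx' t' a1' a2' a3')"
| parT_ref: "par r r' \<Longrightarrow> parT (TRef b r) (TRef b r')"
| parT_fun: "parT tx tx' \<Longrightarrow> parT t t' \<Longrightarrow> parT (TFun tx t) (TFun tx' t')"
| parT_peq: "parT t t' \<Longrightarrow> par a a' \<Longrightarrow> par c c' \<Longrightarrow> parT (TPEq t a c) (TPEq t' a' c')"

abbreviation pars :: "expr \<Rightarrow> expr \<Rightarrow> bool" where
  "pars \<equiv> par\<^sup>*\<^sup>*"

text \<open>A pending substitution is a list of pairs of closed values; its i-th entry
  is the value pair for de Bruijn index i. Extension delta,(v3,v4)/x is consing.\<close>
type_synonym psubst = "(expr \<times> expr) list"

definition pending_subst :: "psubst \<Rightarrow> bool" where
  "pending_subst \<delta> \<longleftrightarrow>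
     (\<forall>(v1, v2) \<in> set \<delta>. is_value v1 \<and> is_value v2 \<and> closed v1 \<and> closed v2)"

fun close_with :: "expr list \<Rightarrow> expr \<Rightarrow> expr" where
  "close_with [] e = e"
| "close_with (v # vs) e = close_with vs (subst0 e v)"

abbreviation delta1 :: "psubst \<Rightarrow> expr \<Rightarrow> expr" where
  "delta1 \<delta> e \<equiv> close_with (map fst \<delta>) e"
abbreviation delta2 :: "psubst \<Rightarrow> expr \<Rightarrow> expr" where
  "delta2 \<delta> e \<equiv> close_with (map snd \<delta>) e"

fun const_of_bty :: "const \<Rightarrow> bty \<Rightarrow> bool" where
  "const_of_bty CTrue b = (b = BBool)"
| "const_of_bty CFalse b = (b = BBool)"
| "const_of_bty CUnit b = (b = BUnit)"
| "const_of_bty _ _ = False"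

fun val_rel :: "psubst \<Rightarrow> expr \<Rightarrow> expr \<Rightarrow> ty \<Rightarrow> bool" where
  "val_rel \<delta> v1 v2 (TRef b r) =
     (\<exists>c. v1 = Const c \<and> v2 = Const c \<and> const_of_bty c b \<and>
          steps (delta1 \<delta> (subst0 r (Const c))) (Const CTrue) \<and>
          steps (delta2 \<delta> (subst0 r (Const c))) (Const CTrue))"
| "val_rel \<delta> v1 v2 (TFun tx t) =
     (\<forall>v3 v4. is_value v3 \<and> is_value v4 \<and> closed v3 \<and> closed v4 \<and> val_rel \<delta> v3 v4 tx \<longrightarrow>
        (\<exists>w1 w2. steps (App v1 v3) w1 \<and> steps (App v2 v4) w2 \<and>
                 is_value w1 \<and> is_value w2 \<and> val_rel ((v3, v4) # \<delta>) w1 w2 t))"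
| "val_rel \<delta> v1 v2 (TPEq t el er) =
     (\<exists>w1 w2. steps (delta1 \<delta> el) w1 \<and> steps (delta2 \<delta> er) w2 \<and>
              is_value w1 \<and> is_value w2 \<and> val_rel \<delta> w1 w2 t)"

definition exp_rel :: "psubst \<Rightarrow> expr \<Rightarrow> expr \<Rightarrow> ty \<Rightarrow> bool" where
  "exp_rel \<delta> e1 e2 t \<longleftrightarrow>
     (\<exists>v1 v2. steps e1 v1 \<and> steps e2 v2 \<and> is_value v1 \<and> is_value v2 \<and> val_rel \<delta> v1 v2 t)"

end

theory Submission imports Defs begin

section \<open>de Bruijn lemmas\<close>

lemma lift_lift:
  shows "i \<le> j \<Longrightarrow> liftE (Suc j) (liftE i e) = liftE i (liftE j e)"
    and "i \<le> j \<Longrightarrow> liftT (Suc j) (liftT i t) = liftT i (liftT j t)"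
  by (induction e and t arbitrary: i j and i j) auto

lemma lift_subst:
  shows "i \<le> j \<Longrightarrow> liftE i (substE j s e) = substE (Suc j) (liftE i s) (liftE i e)"
    and "i \<le> j \<Longrightarrow> liftT i (substT j s t) = substT (Suc j) (liftE i s) (liftT i t)"
  by (induction e and t arbitrary: i j s and i j s) (auto simp: lift_lift)

lemma lift_subst2:
  shows "j \<le> i \<Longrightarrow> liftE i (substE j s e) = substE j (liftE i s) (liftE (Suc i) e)"
    and "j \<le> i \<Longrightarrow> liftT i (substT j s t) = substT j (liftE i s) (liftT (Suc i) t)"
  by (induction e and t arbitrary: i j s and i j s) (auto simp: lift_lift)

lemma subst_lift:
  shows "substE k s (liftE k e) = e" and "substT k s (liftT k t) = t"
  by (induction e and t arbitrary: k s and k s) auto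

lemma subst_subst:
  shows "j \<le> k \<Longrightarrow> substE k s (substE j u e) = substE j (substE k s u) (substE (Suc k) (liftE j s) e)"
    and "j \<le> k \<Longrightarrow> substT k s (substT j u t) = substT j (substE k s u) (substT (Suc k) (liftE j s) t)"
  by (induction e and t arbitrary: j k s u and j k s u)
     (auto simp: subst_lift lift_lift lift_subst)

fun cntE :: "nat \<Rightarrow> expr \<Rightarrow> nat" and cntT :: "nat \<Rightarrow> ty \<Rightarrow> nat" where
  "cntE k (Const c) = 0"
| "cntE k (Var i) = (if i = k then 1 else 0)"
| "cntE k (App a b) = cntE k a + cntE k b"
| "cntE k (Lam t e) = cntT k t + cntE (Suc k) e"
| "cntE k (BEq b a1 a2 a3) = cntE k a1 + cntE k a2 + cntE k a3"
| "cntE k (XEq tx t a1 a2 a3) = cntT k tx + cntT (Suc k) t + cntE k a1 + cntE k a2 + cntE k a3"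
| "cntT k (TRef b r) = cntE (Suc k) r"
| "cntT k (TFun tx t) = cntT k tx + cntT (Suc k) t"
| "cntT k (TPEq t a b) = cntT k t + cntE k a + cntE k b"

lemma cnt_lift1:
  shows "j < k \<Longrightarrow> cntE j (liftE k e) = cntE j e" and "j < k \<Longrightarrow> cntT j (liftT k t) = cntT j t"
  by (induction e and t arbitrary: j k and j k) auto

lemma cnt_lift2:
  shows "cntE j (liftE j e) = 0" and "cntT j (liftT j t) = 0"
  by (induction e and t arbitrary: j and j) auto

lemma cnt_lift3:
  shows "k \<le> j \<Longrightarrow> cntE (Suc j) (liftE k e) = cntE j e" and "k \<le> j \<Longrightarrow> cntT (Suc j) (liftT k t) = cntT j t"
  by (induction e and t arbitrary: j k and j k) auto

lemma cnt_subst1: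
  shows "j \<le> k \<Longrightarrow> cntE j s = 0 \<Longrightarrow> cntE j (substE (Suc k) s e) = cntE j e"
    and "j \<le> k \<Longrightarrow> cntE j s = 0 \<Longrightarrow> cntT j (substT (Suc k) s t) = cntT j t"
  by (induction e and t arbitrary: j k s and j k s) (auto simp: cnt_lift3)

lemma cnt_subst2:
  shows "j \<le> k \<Longrightarrow> cntE k (substE j u e) = cntE (Suc k) e + cntE j e * cntE k u"
    and "j \<le> k \<Longrightarrow> cntT k (substT j u t) = cntT (Suc k) t + cntT j t * cntE k u"
  by (induction e and t arbitrary: j k u and j k u) (auto simp: cnt_lift3 algebra_simps)

section \<open>Sized parallel reduction\<close>

inductive parN :: "nat \<Rightarrow> expr \<Rightarrow> expr \<Rightarrow> bool"
and parTN :: "nat \<Rightarrow> ty \<Rightarrow> ty \<Rightarrow> bool" where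
  pn_var: "parN n (Var x) (Var x)"
| pn_const: "parN n (Const c) (Const c)"
| pn_lam: "parTN n1 t t' \<Longrightarrow> parN n2 e e' \<Longrightarrow> n1 + n2 < n \<Longrightarrow> parN n (Lam t e) (Lam t' e')"
| pn_app: "parN n1 e1 e1' \<Longrightarrow> parN n2 e2 e2' \<Longrightarrow> n1 + n2 < n \<Longrightarrow> parN n (App e1 e2) (App e1' e2')"
| pn_beta: "is_value v \<Longrightarrow> parN n1 e e' \<Longrightarrow> parN n2 v v' \<Longrightarrow> n1 + cntE 0 e' * n2 < n \<Longrightarrow>
    parN n (App (Lam t e) v) (subst0 e' v')"
| pn_eq1: "parN n (App (Const (CEqB b)) (Const c1)) (Const (CEqC c1 b))"
| pn_eq2: "parN n (App (Const (CEqC c1 b)) (Const c2)) (Const (if c1 = c2 then CTrue else CFalse))"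
| pn_beq: "parN n1 a1 a1' \<Longrightarrow> parN n2 a2 a2' \<Longrightarrow> parN n3 a3 a3' \<Longrightarrow> n1 + n2 + n3 < n \<Longrightarrow>
    parN n (BEq b a1 a2 a3) (BEq b a1' a2' a3')"
| pn_xeq: "parTN n1 tx tx' \<Longrightarrow> parTN n2 t t' \<Longrightarrow> parN n3 a1 a1' \<Longrightarrow> parN n4 a2 a2' \<Longrightarrow> parN n5 a3 a3' \<Longrightarrow>
    n1 + n2 + n3 + n4 + n5 < n \<Longrightarrow>
    parN n (XEq tx t a1 a2 a3) (XEq tx' t' a1' a2' a3')"
| pnT_ref: "parN n1 r r' \<Longrightarrow> n1 < n \<Longrightarrow> parTN n (TRef b r) (TRef b r')"
| pnT_fun: "parTN n1 tx tx' \<Longrightarrow> parTN n2 t t' \<Longrightarrow> n1 + n2 < n \<Longrightarrow> parTN n (TFun tx t) (TFun tx' t')"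
| pnT_peq: "parTN n1 t t' \<Longrightarrow> parN n2 a a' \<Longrightarrow> parN n3 c c' \<Longrightarrow> n1 + n2 + n3 < n \<Longrightarrow>
    parTN n (TPEq t a c) (TPEq t' a' c')"

lemma pn_eq2_gen: "c = (if c1 = c2 then CTrue else CFalse) \<Longrightarrow>
   parN n (App (Const (CEqC c1 b)) (Const c2)) (Const c)"
  using pn_eq2 by simp

lemma parN_mono:
  shows "parN n e e' \<Longrightarrow> n \<le> m \<Longrightarrow> parN m e e'"
    and "parTN n t t' \<Longrightarrow> n \<le> m \<Longrightarrow> parTN m t t'"
proof -
  show "parN n e e' \<Longrightarrow> n \<le> m \<Longrightarrow> parN m e e'"
    by (erule parN.cases) (auto intro: parN_parTN.intros pn_eq2_gen)
  show "parTN n t t' \<Longrightarrow> n \<le> m \<Longrightarrow> parTN m t t'"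
    by (erule parTN.cases) (auto intro: parN_parTN.intros)
qed

lemma value_lift: "is_value v \<Longrightarrow> is_value (liftE k v)"
  by (induction rule: is_value.induct) (auto intro: is_value.intros)

lemma value_subst: "is_value v \<Longrightarrow> is_value (substE k s v)"
  by (induction rule: is_value.induct) (auto intro: is_value.intros)

lemma parN_lift:
  shows "parN n e e' \<Longrightarrow> parN n (liftE k e) (liftE k e')"
    and "parTN n t t' \<Longrightarrow> parTN n (liftT k t) (liftT k t')"
proof (induction arbitrary: k and k rule: parN_parTN.inducts)
  case (pn_beta v n1 e e' n2 v' n t)
  have "parN n (App (Lam (liftT k t) (liftE (Suc k) e)) (liftE k v))
     (subst0 (liftE (Suc k) e') (liftE k v'))"
    using pn_beta by (intro parN_parTN.intros) (auto simp: value_lift cnt_lift1)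
  then show ?case by (simp add: lift_subst2)
next
  case (pn_xeq n1 tx tx' n2 t t' n3 a1 a1' n4 a2 a2' n5 a3 a3' n)
  then show ?case by (auto intro!: parN_parTN.intros)
qed (auto intro: parN_parTN.intros pn_eq2_gen)

lemma parN_subst:
  shows "parN n e e' \<Longrightarrow> parN m s s' \<Longrightarrow> parN (n + cntE k e' * m) (substE k s e) (substE k s' e')"
    and "parTN n t t' \<Longrightarrow> parN m s s' \<Longrightarrow> parTN (n + cntT k t' * m) (substT k s t) (substT k s' t')"
proof (induction arbitrary: k m s s' and k m s s' rule: parN_parTN.inducts)
  case (pn_var n x)
  then show ?case by (auto intro: parN_parTN.intros parN_mono)
next
  case (pn_beta v n1 e e' n2 v' n t)
  have l: "parN m (liftE 0 s) (liftE 0 s')" using parN_lift(1)[OF pn_beta.prems] .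
  have A: "parN (n1 + cntE (Suc k) e' * m) (substE (Suc k) (liftE 0 s) e) (substE (Suc k) (liftE 0 s') e')"
    using pn_beta.IH(1) l by blast
  have B: "parN (n2 + cntE k v' * m) (substE k s v) (substE k s' v')"
    using pn_beta.IH(2) pn_beta.prems by blast
  have c0: "cntE 0 (substE (Suc k) (liftE 0 s') e') = cntE 0 e'"
    by (simp add: cnt_subst1 cnt_lift2)
  have ck: "cntE k (subst0 e' v') = cntE (Suc k) e' + cntE 0 e' * cntE k v'"
    by (simp add: cnt_subst2)
  have "parN (n + cntE k (subst0 e' v') * m)
     (App (Lam (substT k s t) (substE (Suc k) (liftE 0 s) e)) (substE k s v))
     (subst0 (substE (Suc k) (liftE 0 s') e') (substE k s' v'))"
  proof (rule parN_parTN.pn_beta[OF _ A B])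
    show "is_value (substE k s v)" using pn_beta value_subst by blast
    show "n1 + cntE (Suc k) e' * m + cntE 0 (substE (Suc k) (liftE 0 s') e') * (n2 + cntE k v' * m)
      < n + cntE k (subst0 e' v') * m"
      unfolding c0 ck using pn_beta.hyps(4) by (simp add: algebra_simps)
  qed
  then show ?case by (simp add: subst_subst)
next
  case (pn_lam n1 t t' n2 e e' n)
  have l: "parN m (liftE 0 s) (liftE 0 s')" using parN_lift(1)[OF pn_lam.prems] .
  have A: "parTN (n1 + cntT k t' * m) (substT k s t) (substT k s' t')" using pn_lam.IH pn_lam.prems by blast
  have B: "parN (n2 + cntE (Suc k) e' * m) (substE (Suc k) (liftE 0 s) e) (substE (Suc k) (liftE 0 s') e')"
    using pn_lam.IH(2) l by blast
  have "parN (n + cntE k (Lam t' e') * m) (Lam (substT k s t) (substE (Suc k) (liftE 0 s) e))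
     (Lam (substT k s' t') (substE (Suc k) (liftE 0 s') e'))"
    by (rule parN_parTN.pn_lam[OF A B]) (use pn_lam.hyps in \<open>simp add: add_mult_distrib\<close>)
  then show ?case by simp
next
  case (pn_xeq n1 tx tx' n2 t t' n3 a1 a1' n4 a2 a2' n5 a3 a3' n)
  have l: "parN m (liftE 0 s) (liftE 0 s')" using parN_lift(1)[OF pn_xeq.prems] .
  have A: "parTN (n1 + cntT k tx' * m) (substT k s tx) (substT k s' tx')" using pn_xeq.IH pn_xeq.prems by blast
  have B: "parTN (n2 + cntT (Suc k) t' * m) (substT (Suc k) (liftE 0 s) t) (substT (Suc k) (liftE 0 s') t')"
    using pn_xeq.IH(2) l by blast
  have C: "parN (n3 + cntE k a1' * m) (substE k s a1) (substE k s' a1')" using pn_xeq.IH pn_xeq.prems by blast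
  have D: "parN (n4 + cntE k a2' * m) (substE k s a2) (substE k s' a2')" using pn_xeq.IH pn_xeq.prems by blast
  have E: "parN (n5 + cntE k a3' * m) (substE k s a3) (substE k s' a3')" using pn_xeq.IH pn_xeq.prems by blast
  have "parN (n + cntE k (XEq tx' t' a1' a2' a3') * m)
     (XEq (substT k s tx) (substT (Suc k) (liftE 0 s) t) (substE k s a1) (substE k s a2) (substE k s a3))
     (XEq (substT k s' tx') (substT (Suc k) (liftE 0 s') t') (substE k s' a1') (substE k s' a2') (substE k s' a3'))"
    by (rule parN_parTN.pn_xeq[OF A B C D E]) (use pn_xeq.hyps in \<open>simp add: add_mult_distrib\<close>)
  then show ?case by simp
next
  case (pnT_ref n1 r r' n b)
  have l: "parN m (liftE 0 s) (liftE 0 s')" using parN_lift(1)[OF pnT_ref.prems] .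
  have B: "parN (n1 + cntE (Suc k) r' * m) (substE (Suc k) (liftE 0 s) r) (substE (Suc k) (liftE 0 s') r')"
    using pnT_ref.IH l by blast
  have "parTN (n + cntT k (TRef b r') * m) (TRef b (substE (Suc k) (liftE 0 s) r))
     (TRef b (substE (Suc k) (liftE 0 s') r'))"
    by (rule parN_parTN.pnT_ref[OF B]) (use pnT_ref.hyps in \<open>simp add: add_mult_distrib\<close>)
  then show ?case by simp
next
  case (pnT_fun n1 tx tx' n2 t t' n)
  have l: "parN m (liftE 0 s) (liftE 0 s')" using parN_lift(1)[OF pnT_fun.prems] .
  have A: "parTN (n1 + cntT k tx' * m) (substT k s tx) (substT k s' tx')" using pnT_fun.IH pnT_fun.prems by blast
  have B: "parTN (n2 + cntT (Suc k) t' * m) (substT (Suc k) (liftE 0 s) t) (substT (Suc k) (liftE 0 s') t')"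
    using pnT_fun.IH(2) l by blast
  have "parTN (n + cntT k (TFun tx' t') * m) (TFun (substT k s tx) (substT (Suc k) (liftE 0 s) t))
     (TFun (substT k s' tx') (substT (Suc k) (liftE 0 s') t'))"
    by (rule parN_parTN.pnT_fun[OF A B]) (use pnT_fun.hyps in \<open>simp add: add_mult_distrib\<close>)
  then show ?case by simp
next
  case (pn_app n1 e1 e1' n2 e2 e2' n)
  have A: "parN (n1 + cntE k e1' * m) (substE k s e1) (substE k s' e1')" using pn_app.IH pn_app.prems by blast
  have B: "parN (n2 + cntE k e2' * m) (substE k s e2) (substE k s' e2')" using pn_app.IH pn_app.prems by blast
  have "parN (n + cntE k (App e1' e2') * m) (App (substE k s e1) (substE k s e2))
     (App (substE k s' e1') (substE k s' e2'))"
    by (rule parN_parTN.pn_app[OF A B]) (use pn_app.hyps in \<open>simp add: add_mult_distrib\<close>)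
  then show ?case by simp
next
  case (pn_beq n1 a1 a1' n2 a2 a2' n3 a3 a3' n b)
  have A: "parN (n1 + cntE k a1' * m) (substE k s a1) (substE k s' a1')" using pn_beq.IH pn_beq.prems by blast
  have B: "parN (n2 + cntE k a2' * m) (substE k s a2) (substE k s' a2')" using pn_beq.IH pn_beq.prems by blast
  have C: "parN (n3 + cntE k a3' * m) (substE k s a3) (substE k s' a3')" using pn_beq.IH pn_beq.prems by blast
  have "parN (n + cntE k (BEq b a1' a2' a3') * m) (BEq b (substE k s a1) (substE k s a2) (substE k s a3))
     (BEq b (substE k s' a1') (substE k s' a2') (substE k s' a3'))"
    by (rule parN_parTN.pn_beq[OF A B C]) (use pn_beq.hyps in \<open>simp add: add_mult_distrib\<close>)
  then show ?case by simp
next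
  case (pnT_peq n1 t t' n2 a a' n3 c c' n)
  have A: "parTN (n1 + cntT k t' * m) (substT k s t) (substT k s' t')" using pnT_peq.IH pnT_peq.prems by blast
  have B: "parN (n2 + cntE k a' * m) (substE k s a) (substE k s' a')" using pnT_peq.IH pnT_peq.prems by blast
  have C: "parN (n3 + cntE k c' * m) (substE k s c) (substE k s' c')" using pnT_peq.IH pnT_peq.prems by blast
  have "parTN (n + cntT k (TPEq t' a' c') * m) (TPEq (substT k s t) (substE k s a) (substE k s c))
     (TPEq (substT k s' t') (substE k s' a') (substE k s' c'))"
    by (rule parN_parTN.pnT_peq[OF A B C]) (use pnT_peq.hyps in \<open>simp add: add_mult_distrib\<close>)
  then show ?case by simp
qed (auto intro: parN_parTN.pn_const parN_parTN.pn_eq1 pn_eq2_gen)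

lemma par_pars_eq2_gen: "c = (if c1 = c2 then CTrue else CFalse) \<Longrightarrow>
   par (App (Const (CEqC c1 b)) (Const c2)) (Const c)"
  using par_eq2 by simp

lemma parN_par:
  shows "parN n e e' \<Longrightarrow> par e e'" and "parTN n t t' \<Longrightarrow> parT t t'"
  by (induction rule: parN_parTN.inducts) (auto intro: par_parT.intros par_pars_eq2_gen)

lemma par_parN:
  shows "par e e' \<Longrightarrow> \<exists>n. parN n e e'" and "parT t t' \<Longrightarrow> \<exists>n. parTN n t t'"
proof (induction rule: par_parT.inducts)
  case (par_beta v e e' v' t)
  then obtain n1 n2 where "parN n1 e e'" "parN n2 v v'" by blast
  then have "parN (Suc (n1 + cntE 0 e' * n2)) (App (Lam t e) v) (subst0 e' v')"
    using par_beta(1) by (intro parN_parTN.pn_beta) auto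
  then show ?case by blast
next
  case (par_lam t t' e e')
  then obtain n1 n2 where "parTN n1 t t'" "parN n2 e e'" by blast
  then show ?case by (meson less_add_Suc2 parN_parTN.pn_lam)
next
  case (par_app e1 e1' e2 e2')
  then obtain n1 n2 where "parN n1 e1 e1'" "parN n2 e2 e2'" by blast
  then show ?case by (meson less_add_Suc2 parN_parTN.pn_app)
next
  case (par_beq a1 a1' a2 a2' a3 a3' b)
  then obtain n1 n2 n3 where "parN n1 a1 a1'" "parN n2 a2 a2'" "parN n3 a3 a3'" by blast
  then show ?case by (meson less_add_Suc2 parN_parTN.pn_beq)
next
  case (par_xeq tx tx' t t' a1 a1' a2 a2' a3 a3')
  then obtain n1 n2 n3 n4 n5 where "parTN n1 tx tx'" "parTN n2 t t'" "parN n3 a1 a1'" "parN n4 a2 a2'" "parN n5 a3 a3'" by blast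
  then show ?case by (meson less_add_Suc2 parN_parTN.pn_xeq)
next
  case (parT_ref r r' b)
  then obtain n1 where "parN n1 r r'" by blast
  then show ?case by (meson lessI parN_parTN.pnT_ref)
next
  case (parT_fun tx tx' t t')
  then obtain n1 n2 where "parTN n1 tx tx'" "parTN n2 t t'" by blast
  then show ?case by (meson less_add_Suc2 parN_parTN.pnT_fun)
next
  case (parT_peq t t' a a' c c')
  then obtain n1 n2 n3 where "parTN n1 t t'" "parN n2 a a'" "parN n3 c c'" by blast
  then show ?case by (meson less_add_Suc2 parN_parTN.pnT_peq)
next
  case (par_eq2 c1 b c2)
  show ?case using pn_eq2_gen by blast
qed (auto intro: parN_parTN.intros)

lemma par_subst: "par e e' \<Longrightarrow> par v v' \<Longrightarrow> par (subst0 e v) (subst0 e' v')"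
  using par_parN(1) parN_par(1) parN_subst(1) by metis

lemma par_refl:
  shows "par e e" and "parT t t"
  by (induction e and t) (auto intro: par_parT.intros)

lemma par_value: "is_value v \<Longrightarrow> par v v' \<Longrightarrow> is_value v'"
proof (induction arbitrary: v' rule: is_value.induct)
  case (1 c) then show ?case by (cases rule: par.cases) (auto intro: is_value.intros)
next
  case (2 t e) then show ?case by (cases rule: par.cases) (auto intro: is_value.intros)
next
  case (3 v b a1 a2) from 3(3) show ?case by (cases rule: par.cases) (auto intro: is_value.intros 3)
next
  case (4 v tx t a1 a2) from 4(3) show ?case by (cases rule: par.cases) (auto intro: is_value.intros 4)
qed

lemma par_to_const: "par v (Const c) \<Longrightarrow> is_value v \<Longrightarrow> v = Const c"
  by (cases rule: par.cases) (auto elim: is_value.cases)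

lemma par_to_lam: "par v (Lam t' b') \<Longrightarrow> is_value v \<Longrightarrow> \<exists>t b. v = Lam t b \<and> par b b'"
  by (cases rule: par.cases) (auto elim: is_value.cases)

lemma steps_app1: "steps e e' \<Longrightarrow> steps (App e e2) (App e' e2)"
  by (induction rule: rtranclp_induct) (auto intro: rtranclp.rtrancl_into_rtrancl step.intros)

lemma steps_app2: assumes "is_value v" shows "steps e e' \<Longrightarrow> steps (App v e) (App v e')"
  by (induction rule: rtranclp_induct) (auto intro: rtranclp.rtrancl_into_rtrancl step.intros assms)

lemma steps_beq: "steps e e' \<Longrightarrow> steps (BEq b a1 a2 e) (BEq b a1 a2 e')"
  by (induction rule: rtranclp_induct) (auto intro: rtranclp.rtrancl_into_rtrancl step.intros)

lemma steps_xeq: "steps e e' \<Longrightarrow> steps (XEq tx t a1 a2 e) (XEq tx t a1 a2 e')"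
  by (induction rule: rtranclp_induct) (auto intro: rtranclp.rtrancl_into_rtrancl step.intros)

lemma steps_step: "step a b \<Longrightarrow> steps b c \<Longrightarrow> steps a c"
  by (rule converse_rtranclp_into_rtranclp)

lemma lemV: "parN n e v' \<Longrightarrow> is_value v' \<Longrightarrow> \<exists>v. steps e v \<and> is_value v \<and> par v v'"
proof (induction n arbitrary: e v' rule: less_induct)
  case (less n)
  from less.prems(1) show ?case
  proof (cases rule: parN.cases)
    case (pn_beta u n1 b b' n2 u' t)
    have "parN (n1 + cntE 0 b' * n2) (subst0 b u) (subst0 b' u')"
      using parN_subst(1)[OF pn_beta(4) pn_beta(5)] by simp
    then obtain v where "steps (subst0 b u) v" "is_value v" "par v v'"
      using less.IH[of "n1 + cntE 0 b' * n2"] pn_beta less.prems(2) by blast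
    moreover have "step e (subst0 b u)" using pn_beta by (auto intro: step.intros)
    ultimately show ?thesis using steps_step by blast
  next
    case (pn_const c)
    then show ?thesis using par_refl by (auto intro: is_value.intros)
  next
    case (pn_lam n1 t t' n2 b b')
    then show ?thesis using parN_par by (auto intro!: is_value.intros par_lam)
  next
    case (pn_eq1 b c1)
    then show ?thesis using par_refl by (auto intro!: is_value.intros step.intros)
  next
    case (pn_eq2 c1 b c2)
    then show ?thesis using par_refl by (auto intro!: is_value.intros step.intros)
  next
    case (pn_var x) then show ?thesis using less.prems(2) by (auto elim: is_value.cases)
  next
    case (pn_app n1 e1 e1' n2 e2 e2') then show ?thesis using less.prems(2) by (auto elim: is_value.cases)
  next
    case (pn_beq n1 a1 a1' n2 a2 a2' n3 a3 a3' b)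
    have "is_value a3'" using less.prems(2) pn_beq by (auto elim: is_value.cases)
    then obtain w where "steps a3 w" "is_value w" "par w a3'"
      using less.IH[of n3] pn_beq by auto
    then show ?thesis using pn_beq parN_par steps_beq
      by (auto intro!: is_value.intros par_beq exI[of _ "BEq b a1 a2 w"])
  next
    case (pn_xeq n1 tx tx' n2 t t' n3 a1 a1' n4 a2 a2' n5 a3 a3')
    have "is_value a3'" using less.prems(2) pn_xeq by (auto elim: is_value.cases)
    then obtain w where "steps a3 w" "is_value w" "par w a3'"
      using less.IH[of n5] pn_xeq by auto
    then show ?thesis using pn_xeq parN_par steps_xeq
      by (auto intro!: is_value.intros par_xeq exI[of _ "XEq tx t a1 a2 w"])
  qed
qed

lemma no_step_const: "\<not> step (Const c) x" by (auto elim: step.cases)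
lemma no_step_lam: "\<not> step (Lam t b) x" by (auto elim: step.cases)
lemma no_step_var: "\<not> step (Var i) x" by (auto elim: step.cases)

lemma lemS: "parN n e e' \<Longrightarrow> step e' e'' \<Longrightarrow> \<exists>e0. steps e e0 \<and> par e0 e''"
proof (induction n arbitrary: e e' e'' rule: less_induct)
  case (less n)
  from less.prems(1) show ?case
  proof (cases rule: parN.cases)
    case (pn_beta u n1 b b' n2 u' t)
    have "parN (n1 + cntE 0 b' * n2) (subst0 b u) (subst0 b' u')"
      using parN_subst(1)[OF pn_beta(4) pn_beta(5)] by simp
    then obtain e0 where "steps (subst0 b u) e0" "par e0 e''"
      using less.IH[of "n1 + cntE 0 b' * n2"] pn_beta less.prems(2) by blast
    moreover have "step e (subst0 b u)" using pn_beta by (auto intro: step.intros)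
    ultimately show ?thesis using steps_step by blast
  next
    case (pn_const c)
    then show ?thesis using less.prems(2) no_step_const by simp
  next
    case (pn_lam n1 t t' n2 b b')
    then show ?thesis using less.prems(2) no_step_lam by simp
  next
    case (pn_var x)
    then show ?thesis using less.prems(2) no_step_var by simp
  next
    case (pn_eq1 b c1)
    then show ?thesis using less.prems(2) no_step_const by simp
  next
    case (pn_eq2 c1 b c2)
    then show ?thesis using less.prems(2) no_step_const by simp
  next
    case (pn_app n1 e1 e1' n2 e2 e2')
    have st: "step (App e1' e2') e''" using less.prems(2) pn_app by simp
    from st show ?thesis
    proof (cases rule: step.cases)
      case (st_beta t b')
      obtain v1 where v1: "steps e1 v1" "is_value v1" "par v1 e1'"
        using lemV[OF pn_app(3)] st_beta by (auto intro: is_value.intros)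
      obtain t0 b0 where lb: "v1 = Lam t0 b0" "par b0 b'"
        using par_to_lam v1 st_beta by blast
      obtain w where w: "steps e2 w" "is_value w" "par w e2'"
        using lemV[OF pn_app(4)] st_beta by auto
      have "steps e (App v1 e2)" using pn_app v1 steps_app1 by simp
      also have "steps (App v1 e2) (App v1 w)" using steps_app2 v1 w by blast
      also have "step (App v1 w) (subst0 b0 w)" using lb w by (auto intro: step.intros)
      finally have "steps e (subst0 b0 w)" .
      moreover have "par (subst0 b0 w) e''" using par_subst lb w st_beta by simp
      ultimately show ?thesis by blast
    next
      case (st_eq1 bb c1)
      obtain v1 where v1: "steps e1 v1" "is_value v1" "par v1 e1'"
        using lemV[OF pn_app(3)] st_eq1 by (auto intro: is_value.intros)
      obtain w where w: "steps e2 w" "is_value w" "par w e2'"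
        using lemV[OF pn_app(4)] st_eq1 by (auto intro: is_value.intros)
      have v1c: "v1 = e1'" "w = e2'" using par_to_const v1 w st_eq1 by auto
      have "steps e (App v1 e2)" using pn_app v1 steps_app1 by simp
      also have "steps (App v1 e2) (App v1 w)" using steps_app2 v1 w by blast
      also have "step (App v1 w) e''" using v1c st by simp
      finally show ?thesis using par_refl by blast
    next
      case (st_eq2 c1 bb c2)
      obtain v1 where v1: "steps e1 v1" "is_value v1" "par v1 e1'"
        using lemV[OF pn_app(3)] st_eq2 by (auto intro: is_value.intros)
      obtain w where w: "steps e2 w" "is_value w" "par w e2'"
        using lemV[OF pn_app(4)] st_eq2 by (auto intro: is_value.intros)
      have v1c: "v1 = e1'" "w = e2'" using par_to_const v1 w st_eq2 by auto
      have "steps e (App v1 e2)" using pn_app v1 steps_app1 by simp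
      also have "steps (App v1 e2) (App v1 w)" using steps_app2 v1 w by blast
      also have "step (App v1 w) e''" using v1c st by simp
      finally show ?thesis using par_refl by blast
    next
      case (st_app1 x')
      obtain e10 where "steps e1 e10" "par e10 x'"
        using less.IH[of n1] pn_app st_app1 by fastforce
      then show ?thesis using pn_app st_app1 steps_app1 parN_par
        by (auto intro!: par_app exI[of _ "App e10 e2"])
    next
      case (st_app2 y')
      obtain v1 where v1: "steps e1 v1" "is_value v1" "par v1 e1'"
        using lemV[OF pn_app(3)] st_app2 by auto
      obtain e20 where e20: "steps e2 e20" "par e20 y'"
        using less.IH[of n2] pn_app st_app2 by fastforce
      have "steps e (App v1 e2)" using pn_app v1 steps_app1 by simp
      also have "steps (App v1 e2) (App v1 e20)" using steps_app2 v1 e20 by blast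
      finally show ?thesis using v1 e20 st_app2 by (auto intro!: par_app)
    qed
  next
    case (pn_beq n1 a1 a1' n2 a2 a2' n3 a3 a3' b)
    have st: "step (BEq b a1' a2' a3') e''" using less.prems(2) pn_beq by simp
    from st show ?thesis
    proof (cases rule: step.cases)
      case (st_beq x')
      obtain e30 where "steps a3 e30" "par e30 x'"
        using less.IH[of n3] pn_beq st_beq by fastforce
      then show ?thesis using pn_beq st_beq steps_beq parN_par
        by (auto intro!: par_beq exI[of _ "BEq b a1 a2 e30"])
    qed
  next
    case (pn_xeq n1 tx tx' n2 t t' n3 a1 a1' n4 a2 a2' n5 a3 a3')
    have st: "step (XEq tx' t' a1' a2' a3') e''" using less.prems(2) pn_xeq by simp
    from st show ?thesis
    proof (cases rule: step.cases)
      case (st_xeq x')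
      obtain e30 where "steps a3 e30" "par e30 x'"
        using less.IH[of n5] pn_xeq st_xeq by fastforce
      then show ?thesis using pn_xeq st_xeq steps_xeq parN_par
        by (auto intro!: par_xeq exI[of _ "XEq tx t a1 a2 e30"])
    qed
  qed
qed

lemma lemM1: "steps e' v' \<Longrightarrow> is_value v' \<Longrightarrow> par e e' \<Longrightarrow> \<exists>v. steps e v \<and> is_value v \<and> par v v'"
proof (induction arbitrary: e rule: converse_rtranclp_induct)
  case base
  then show ?case using par_parN(1) lemV by blast
next
  case (step y z)
  obtain n where "parN n e y" using par_parN(1) step.prems(2) by blast
  then obtain e0 where e0: "steps e e0" "par e0 z" using lemS step.hyps(1) by blast
  obtain v where "steps e0 v" "is_value v" "par v v'" using step.IH[OF step.prems(1) e0(2)] by blast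
  then show ?case using rtranclp_trans[OF e0(1)] by blast
qed

lemma lemM2: "pars e e' \<Longrightarrow> steps e' v' \<Longrightarrow> is_value v' \<Longrightarrow> \<exists>v. steps e v \<and> is_value v \<and> pars v v'"
proof (induction arbitrary: v' rule: converse_rtranclp_induct)
  case base
  then show ?case using rtranclp.rtrancl_refl[of par v'] by blast
next
  case (step y z)
  obtain vz where vz: "steps z vz" "is_value vz" "pars vz v'" using step.IH step.prems by blast
  obtain v where "steps y v" "is_value v" "par v vz" using lemM1[OF vz(1) vz(2) step.hyps(1)] by blast
  then show ?case using converse_rtranclp_into_rtranclp[of par v vz v'] vz(3) by blast
qed

lemma pars_value: "pars v v' \<Longrightarrow> is_value v \<Longrightarrow> is_value v'"
proof (induction rule: rtranclp_induct)
  case (step y z) then show ?case using par_value[of y z] by blast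
qed simp

lemma pars_to_const: "pars v (Const c) \<Longrightarrow> is_value v \<Longrightarrow> v = Const c"
proof (induction rule: converse_rtranclp_induct)
  case base then show ?case by simp
next
  case (step y z)
  have "is_value z" using par_value[OF step.prems step.hyps(1)] .
  then have "z = Const c" using step.IH by blast
  then show ?case using par_to_const step.hyps(1) step.prems by blast
qed

lemma pars_app1: "pars a a' \<Longrightarrow> pars (App a c) (App a' c)"
proof (induction rule: rtranclp_induct)
  case (step y z)
  have "par (App y c) (App z c)" using step.hyps(2) par_refl(1) by (rule par_app)
  then show ?case using step.IH by (rule rtranclp.rtrancl_into_rtrancl[rotated])
qed simp

lemma lemB: "val_rel \<delta> v1' v2' \<tau> \<Longrightarrow> pars v1 v1' \<Longrightarrow> pars v2 v2' \<Longrightarrow> is_value v1 \<Longrightarrow> is_value v2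
  \<Longrightarrow> val_rel \<delta> v1 v2 \<tau>"
proof (induction \<delta> v1' v2' \<tau> arbitrary: v1 v2 rule: val_rel.induct)
  case (1 \<delta> v1' v2' b r)
  then show ?case using pars_to_const by auto
next
  case (2 \<delta> v1' v2' tx t)
  show ?case unfolding val_rel.simps
  proof (intro allI impI)
    fix v3 v4
    assume a: "is_value v3 \<and> is_value v4 \<and> closed v3 \<and> closed v4 \<and> val_rel \<delta> v3 v4 tx"
    then obtain w1 w2 where w: "steps (App v1' v3) w1" "steps (App v2' v4) w2" "is_value w1" "is_value w2"
      "val_rel ((v3, v4) # \<delta>) w1 w2 t" using "2.prems"(1) a by (simp only: val_rel.simps) blast
    obtain u1 where u1: "steps (App v1 v3) u1" "is_value u1" "pars u1 w1"
      using lemM2[OF pars_app1[OF "2.prems"(2)] w(1) w(3)] by blast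
    obtain u2 where u2: "steps (App v2 v4) u2" "is_value u2" "pars u2 w2"
      using lemM2[OF pars_app1[OF "2.prems"(3)] w(2) w(4)] by blast
    have "val_rel ((v3, v4) # \<delta>) u1 u2 t"
      using "2.IH"(2)[OF a w(5) u1(3) u2(3) u1(2) u2(2)] .
    then show "\<exists>w1 w2. steps (App v1 v3) w1 \<and> steps (App v2 v4) w2 \<and>
                 is_value w1 \<and> is_value w2 \<and> val_rel ((v3, v4) # \<delta>) w1 w2 t"
      using u1 u2 by blast
  qed
next
  case (3 \<delta> v1' v2' t el er)
  then show ?case by simp
qed

theorem lemmaB20:
  assumes "pending_subst \<delta>"
    and "pars e1 e1'"
    and "pars e2 e2'"
    and "exp_rel \<delta> e1' e2' \<tau>"
  shows "exp_rel \<delta> e1 e2 \<tau>"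
proof -
  obtain v1' v2' where v: "steps e1' v1'" "steps e2' v2'" "is_value v1'" "is_value v2'"
    "val_rel \<delta> v1' v2' \<tau>" using assms(4) unfolding exp_rel_def by blast
  obtain v1 where v1: "steps e1 v1" "is_value v1" "pars v1 v1'" using lemM2[OF assms(2) v(1) v(3)] by blast
  obtain v2 where v2: "steps e2 v2" "is_value v2" "pars v2 v2'" using lemM2[OF assms(3) v(2) v(4)] by blast
  show ?thesis unfolding exp_rel_def using v1 v2 lemB[OF v(5) v1(3) v2(3) v1(2) v2(2)] by blast
qed

end
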